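(* Let $\mathcal{A}$ be an alternative $W^{*}$-factor, $\mathcal{B}$ an alternative complex $\ast$-algebra, and $\Phi:\mathcal{A}\to\mathcal{B}$ a bijection preserving product $ab+ba^{*}$ (resp. $ab-ba^{*}$). Let $p_{1}\in\mathcal{A}$ be a projection with $p_{1}\neq 1_{\mathcal{A}}$, $p_{2}=1_{\mathcal{A}}-p_{1}$, and $\mathcal{A}_{ij}=p_{i}\mathcal{A}p_{j}$. Then for all $a_{11}\in\mathcal{A}_{11}$, $b_{12}\in\mathcal{A}_{12}$, $c_{21}\in\mathcal{A}_{21}$, $d_{22}\in\mathcal{A}_{22}$: (i) $\Phi(a_{11}+b_{12}+c_{21})=\Phi(a_{11})+\Phi(b_{12})+\Phi(c_{21})$; (ii) $\Phi(b_{12}+c_{21}+d_{22})=\Phi(b_{12})+\Phi(c_{21})+\Phi(d_{22})$.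
   Context: An alternative $W^{*}$-factor is a prime alternative $C^{*}$-algebra (complete normed alternative complex $\ast$-algebra with $\|a^{*}a\|=\|a\|^{2}$) that is a dual Banach space; it is unital. A projection is a nonzero self-adjoint idempotent. $\mathcal{A}_{ij}$ are the Peirce components with respect to $p_{1}$. $\Phi$ preserves product $ab+ba^{*}$ (resp. $ab-ba^{*}$) if $\Phi(ab+ba^{*})=\Phi(a)\Phi(b)+\Phi(b)\Phi(a)^{*}$ (resp. $\Phi(ab-ba^{*})=\Phi(a)\Phi(b)-\Phi(b)\Phi(a)^{*}$) for all $a,b\in\mathcal{A}$. *)

theory Defs
  imports Complex_Main
begin

definition cvs :: "(complex \<Rightarrow> 'a::ab_group_add \<Rightarrow> 'a) \<Rightarrow> bool" where
  "cvs smul \<longleftrightarrow>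
     (\<forall>c x y. smul c (x + y) = smul c x + smul c y) \<and>
     (\<forall>c d x. smul (c + d) x = smul c x + smul d x) \<and>
     (\<forall>c d x. smul c (smul d x) = smul (c * d) x) \<and>
     (\<forall>x. smul 1 x = x)"

definition alt_star_alg ::
  "(complex \<Rightarrow> 'a::ab_group_add \<Rightarrow> 'a) \<Rightarrow> ('a \<Rightarrow> 'a \<Rightarrow> 'a) \<Rightarrow> ('a \<Rightarrow> 'a) \<Rightarrow> bool" where
  "alt_star_alg smul mult star \<longleftrightarrow>
     cvs smul \<and>
     (\<forall>x y z. mult (x + y) z = mult x z + mult y z) \<and>
     (\<forall>x y z. mult x (y + z) = mult x y + mult x z) \<and>
     (\<forall>c x y. mult (smul c x) y = smul c (mult x y)) \<and>
     (\<forall>c x y. mult x (smul c y) = smul c (mult x y)) \<and>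
     (\<forall>x y. mult (mult x x) y = mult x (mult x y)) \<and>
     (\<forall>x y. mult (mult y x) x = mult y (mult x x)) \<and>
     (\<forall>x y. star (x + y) = star x + star y) \<and>
     (\<forall>c x. star (smul c x) = smul (cnj c) (star x)) \<and>
     (\<forall>x. star (star x) = x) \<and>
     (\<forall>x y. star (mult x y) = mult (star y) (star x))"

text \<open>The norm and completeness come from the type class \<open>banach\<close>; the complex scalar
  multiplication extends the real one.\<close>
definition alt_Cstar_alg ::
  "(complex \<Rightarrow> 'a::banach \<Rightarrow> 'a) \<Rightarrow> ('a \<Rightarrow> 'a \<Rightarrow> 'a) \<Rightarrow> ('a \<Rightarrow> 'a) \<Rightarrow> bool" where
  "alt_Cstar_alg smul mult star \<longleftrightarrow>
     alt_star_alg smul mult star \<and>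
     (\<forall>r x. smul (complex_of_real r) x = scaleR r x) \<and>
     (\<forall>c x. norm (smul c x) = cmod c * norm x) \<and>
     (\<forall>x y. norm (mult x y) \<le> norm x * norm y) \<and>
     (\<forall>x. norm (mult (star x) x) = (norm x)\<^sup>2)"

definition is_ideal ::
  "(complex \<Rightarrow> 'a::ab_group_add \<Rightarrow> 'a) \<Rightarrow> ('a \<Rightarrow> 'a \<Rightarrow> 'a) \<Rightarrow> 'a set \<Rightarrow> bool" where
  "is_ideal smul mult I \<longleftrightarrow>
     0 \<in> I \<and> (\<forall>x\<in>I. \<forall>y\<in>I. x + y \<in> I) \<and> (\<forall>c. \<forall>x\<in>I. smul c x \<in> I) \<and>
     (\<forall>a. \<forall>x\<in>I. mult a x \<in> I \<and> mult x a \<in> I)"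

definition prime_alg ::
  "(complex \<Rightarrow> 'a::ab_group_add \<Rightarrow> 'a) \<Rightarrow> ('a \<Rightarrow> 'a \<Rightarrow> 'a) \<Rightarrow> bool" where
  "prime_alg smul mult \<longleftrightarrow>
     (\<forall>I J. is_ideal smul mult I \<and> is_ideal smul mult J \<and>
            (\<forall>x\<in>I. \<forall>y\<in>J. mult x y = 0) \<longrightarrow> I = {0} \<or> J = {0})"

definition clinear_fun :: "(complex \<Rightarrow> 'a::ab_group_add \<Rightarrow> 'a) \<Rightarrow> ('a \<Rightarrow> complex) \<Rightarrow> bool" where
  "clinear_fun smul f \<longleftrightarrow> (\<forall>x y. f (x + y) = f x + f y) \<and> (\<forall>c x. f (smul c x) = c * f x)"

definition bounded_fun :: "('a::real_normed_vector \<Rightarrow> complex) \<Rightarrow> bool" where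
  "bounded_fun f \<longleftrightarrow> (\<exists>K. \<forall>x. cmod (f x) \<le> K * norm x)"

definition fnorm :: "('a::real_normed_vector \<Rightarrow> complex) \<Rightarrow> real" where
  "fnorm f = Sup {cmod (f x) | x. norm x \<le> 1}"

definition cdual :: "(complex \<Rightarrow> 'a::real_normed_vector \<Rightarrow> 'a) \<Rightarrow> ('a \<Rightarrow> complex) set" where
  "cdual smul = {f. clinear_fun smul f \<and> bounded_fun f}"

text \<open>A is a dual Banach space: there is a complex subspace F of the dual A' (a copy of the
  predual) such that the canonical map a \<mapsto> (f \<mapsto> f a) is an isometric isomorphism of A onto
  the Banach dual of F (bounded linear functionals on F w.r.t. the functional norm).\<close>
definition dual_banach :: "(complex \<Rightarrow> 'a::real_normed_vector \<Rightarrow> 'a) \<Rightarrow> bool" where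
  "dual_banach smul \<longleftrightarrow>
     (\<exists>F. F \<subseteq> cdual smul \<and> (\<lambda>x. 0) \<in> F \<and>
          (\<forall>f\<in>F. \<forall>g\<in>F. (\<lambda>x. f x + g x) \<in> F) \<and>
          (\<forall>c. \<forall>f\<in>F. (\<lambda>x. c * f x) \<in> F) \<and>
          (\<forall>a. norm a = Sup {cmod (f a) | f. f \<in> F \<and> fnorm f \<le> 1}) \<and>
          (\<forall>\<phi> :: ('a \<Rightarrow> complex) \<Rightarrow> complex.
              (\<forall>f\<in>F. \<forall>g\<in>F. \<phi> (\<lambda>x. f x + g x) = \<phi> f + \<phi> g) \<and>
              (\<forall>c. \<forall>f\<in>F. \<phi> (\<lambda>x. c * f x) = c * \<phi> f) \<and>
              (\<exists>K. \<forall>f\<in>F. cmod (\<phi> f) \<le> K * fnorm f)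
              \<longrightarrow> (\<exists>a. \<forall>f\<in>F. \<phi> f = f a)))"

definition is_unit :: "('a \<Rightarrow> 'a \<Rightarrow> 'a) \<Rightarrow> 'a \<Rightarrow> bool" where
  "is_unit mult e \<longleftrightarrow> (\<forall>x. mult e x = x \<and> mult x e = x)"

definition alt_Wstar_factor ::
  "(complex \<Rightarrow> 'a::banach \<Rightarrow> 'a) \<Rightarrow> ('a \<Rightarrow> 'a \<Rightarrow> 'a) \<Rightarrow> ('a \<Rightarrow> 'a) \<Rightarrow> 'a \<Rightarrow> bool" where
  "alt_Wstar_factor smul mult star one \<longleftrightarrow>
     alt_Cstar_alg smul mult star \<and> prime_alg smul mult \<and> dual_banach smul \<and> is_unit mult one"

definition is_projection :: "('a::zero \<Rightarrow> 'a \<Rightarrow> 'a) \<Rightarrow> ('a \<Rightarrow> 'a) \<Rightarrow> 'a \<Rightarrow> bool" where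
  "is_projection mult star p \<longleftrightarrow> p \<noteq> 0 \<and> star p = p \<and> mult p p = p"

definition peirce :: "('a \<Rightarrow> 'a \<Rightarrow> 'a) \<Rightarrow> 'a \<Rightarrow> 'a \<Rightarrow> 'a set" where
  "peirce mult p q = {mult (mult p x) q | x. True}"

definition preserves_plus ::
  "('a::plus \<Rightarrow> 'a \<Rightarrow> 'a) \<Rightarrow> ('a \<Rightarrow> 'a) \<Rightarrow> ('b::plus \<Rightarrow> 'b \<Rightarrow> 'b) \<Rightarrow> ('b \<Rightarrow> 'b) \<Rightarrow> ('a \<Rightarrow> 'b) \<Rightarrow> bool" where
  "preserves_plus multA starA multB starB \<Phi> \<longleftrightarrow>
     (\<forall>a b. \<Phi> (multA a b + multA b (starA a)) = multB (\<Phi> a) (\<Phi> b) + multB (\<Phi> b) (starB (\<Phi> a)))"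

definition preserves_minus ::
  "('a::minus \<Rightarrow> 'a \<Rightarrow> 'a) \<Rightarrow> ('a \<Rightarrow> 'a) \<Rightarrow> ('b::minus \<Rightarrow> 'b \<Rightarrow> 'b) \<Rightarrow> ('b \<Rightarrow> 'b) \<Rightarrow> ('a \<Rightarrow> 'b) \<Rightarrow> bool" where
  "preserves_minus multA starA multB starB \<Phi> \<longleftrightarrow>
     (\<forall>a b. \<Phi> (multA a b - multA b (starA a)) = multB (\<Phi> a) (\<Phi> b) - multB (\<Phi> b) (starB (\<Phi> a)))"

end

theory Submission imports Defs begin

definition sg :: "bool \<Rightarrow> 'a::ab_group_add \<Rightarrow> 'a" where
  "sg s x = (if s then x else - x)"

definition PA :: "('a::ab_group_add \<Rightarrow> 'a \<Rightarrow> 'a) \<Rightarrow> ('a \<Rightarrow> 'a) \<Rightarrow> bool \<Rightarrow> 'a \<Rightarrow> 'a \<Rightarrow> 'a" where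
  "PA m st s x y = m x y + sg s (m y (st x))"

lemma sg_add: "sg s (x + y) = sg s x + sg s y" by (simp add: sg_def)
lemma sg_0[simp]: "sg s 0 = 0" by (simp add: sg_def)
lemma sg_inj: "sg s x = sg s y \<longleftrightarrow> x = y" by (simp add: sg_def)

locale asa =
  fixes smul :: "complex \<Rightarrow> 'a::ab_group_add \<Rightarrow> 'a" and m :: "'a \<Rightarrow> 'a \<Rightarrow> 'a" and st :: "'a \<Rightarrow> 'a"
  assumes alg: "alt_star_alg smul m st"
begin
lemma cv: "cvs smul" using alg unfolding alt_star_alg_def by blast
lemma ladd: "m (x + y) z = m x z + m y z" using alg unfolding alt_star_alg_def by (elim conjE) (erule allE)+
lemma radd: "m x (y + z) = m x y + m x z" using alg unfolding alt_star_alg_def by blast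
lemma lsm: "m (smul c x) y = smul c (m x y)" using alg unfolding alt_star_alg_def by blast
lemma rsm: "m x (smul c y) = smul c (m x y)" using alg unfolding alt_star_alg_def by blast
lemma lalt: "m (m x x) y = m x (m x y)" using alg unfolding alt_star_alg_def by blast
lemma ralt: "m (m y x) x = m y (m x x)" using alg unfolding alt_star_alg_def by blast
lemma stadd: "st (x + y) = st x + st y" using alg unfolding alt_star_alg_def by blast
lemma stsm: "st (smul c x) = smul (cnj c) (st x)" using alg unfolding alt_star_alg_def by blast
lemma stst: "st (st x) = x" using alg unfolding alt_star_alg_def by blast
lemma stm: "st (m x y) = m (st y) (st x)" using alg unfolding alt_star_alg_def by blast
lemma smadd: "smul c (x + y) = smul c x + smul c y" using cv unfolding cvs_def by blast
lemma smadd2: "smul (c + d) x = smul c x + smul d x" using cv unfolding cvs_def by blast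
lemma smsm: "smul c (smul d x) = smul (c * d) x" using cv unfolding cvs_def by blast
lemma sm1: "smul 1 x = x" using cv unfolding cvs_def by blast

lemma m0l[simp]: "m 0 x = 0"
  using ladd[of 0 0 x] by simp
lemma m0r[simp]: "m x 0 = 0"
  using radd[of x 0 0] by simp
lemma mnegl: "m (- x) y = - m x y"
  using ladd[of "-x" x y] by (simp add: eq_neg_iff_add_eq_0)
lemma mnegr: "m x (- y) = - m x y"
  using radd[of x "-y" y] by (simp add: eq_neg_iff_add_eq_0)
lemma mdiffl: "m (x - y) z = m x z - m y z"
  unfolding diff_conv_add_uminus by (simp only: ladd mnegl)
lemma mdiffr: "m x (y - z) = m x y - m x z"
  unfolding diff_conv_add_uminus by (simp only: radd mnegr)
lemma st0[simp]: "st 0 = 0"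
  using stadd[of 0 0] by simp
lemma stneg: "st (- x) = - st x"
  using stadd[of "-x" x] by (simp add: eq_neg_iff_add_eq_0)
lemma stdiff: "st (x - y) = st x - st y"
  unfolding diff_conv_add_uminus by (simp only: stadd stneg)
lemma sm0[simp]: "smul c 0 = 0"
  using smadd[of c 0 0] by simp
lemma sm0l[simp]: "smul 0 x = 0"
  using smadd2[of 0 0 x] by simp
lemma smneg: "smul c (- x) = - smul c x"
  using smadd[of c "-x" x] by (simp add: eq_neg_iff_add_eq_0)
lemma smnegl: "smul (- c) x = - smul c x"
  using smadd2[of "-c" c x] by (simp add: eq_neg_iff_add_eq_0)
lemma smdiff: "smul c (x - y) = smul c x - smul c y"
  unfolding diff_conv_add_uminus by (simp only: smadd smneg)

lemma smul_cancel: assumes "c \<noteq> 0" "smul c x = smul c y" shows "x = y"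
proof -
  have "smul (1/c) (smul c x) = smul (1/c) (smul c y)" using assms by simp
  thus ?thesis using assms(1) by (simp add: smsm sm1)
qed

lemma dbl_cancel: fixes x y :: 'a assumes "x + x = y + y" shows "x = y"
proof -
  have h: "z = smul (1/2) (z + z)" for z
    using smadd2[of "1/2" "1/2" z] by (simp add: smadd sm1)
  show ?thesis using h[of x] h[of y] assms by simp
qed

lemma flex: "m (m x y) x = m x (m y x)"
proof -
  have "m (m x (y + x)) (y + x) = m x (m (y + x) (y + x))" by (rule ralt)
  hence "m (m x y) y + m (m x y) x + (m (m x x) y + m (m x x) x)
       = m x (m y y) + m x (m y x) + (m x (m x y) + m x (m x x))"
    by (simp add: ladd radd add_ac)
  thus ?thesis by (simp add: ralt lalt)
qed

lemma PA_addr: "PA m st s x (y + z) = PA m st s x y + PA m st s x z"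
  by (simp add: PA_def radd ladd sg_add algebra_simps)
lemma PA_addl: "PA m st s (x + y) z = PA m st s x z + PA m st s y z"
  by (simp add: PA_def radd ladd stadd sg_add algebra_simps)
lemma PA_0r[simp]: "PA m st s x 0 = 0" by (simp add: PA_def)
lemma PA_0l[simp]: "PA m st s 0 y = 0" by (simp add: PA_def)
end


locale asap = asa +
  fixes one p
  assumes unitl: "m one x = x" and unitr: "m x one = x" and stp: "st p = p" and pidem: "m p p = p"
begin

lemma stone: "st one = one"
proof -
  have "st (st one) = st (m (st one) one)" by (simp add: unitr)
  also have "... = m (st one) (st (st one))" by (simp add: stm)
  finally show ?thesis by (simp add: stst unitl unitr)
qed

definition pp :: "bool \<Rightarrow> 'a" where "pp i = (if i then p else one - p)"

lemma pp_idem: "m (pp i) (pp i) = pp i"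
  by (cases i) (simp_all add: pp_def pidem mdiffl mdiffr unitl unitr)
lemma pp_st: "st (pp i) = pp i"
  by (cases i) (simp_all add: pp_def stp stdiff stone)
lemma pp_compl: "k \<noteq> i \<Longrightarrow> pp k = one - pp i"
  by (cases i; cases k) (simp_all add: pp_def)

lemma left_pp: "m (pp k) (m (pp i) x) = (if k = i then m (pp i) x else 0)"
proof (cases "k = i")
  case True
  then show ?thesis using lalt[of "pp i" x] by (simp add: pp_idem)
next
  case False
  then show ?thesis using lalt[of "pp i" x] by (simp add: pp_compl mdiffl unitl pp_idem)
qed

lemma right_pp: "m (m x (pp j)) (pp k) = (if j = k then m x (pp j) else 0)"
proof (cases "j = k")
  case True
  then show ?thesis using ralt[of x "pp j"] by (simp add: pp_idem)
next
  case False
  then have "pp k = one - pp j" by (simp add: pp_compl)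
  then show ?thesis using False ralt[of x "pp j"] by (simp add: mdiffr unitr pp_idem)
qed

lemma mid: "m (pp i) (m y (pp j)) = m (m (pp i) y) (pp j)"
proof (cases "i = j")
  case True
  then show ?thesis by (simp add: flex)
next
  case False
  then have "pp j = one - pp i" by (simp add: pp_compl)
  then show ?thesis by (simp add: mdiffr unitr flex)
qed

definition comp :: "bool \<Rightarrow> bool \<Rightarrow> 'a \<Rightarrow> 'a" where
  "comp i j x = m (m (pp i) x) (pp j)"

lemma comp_left: "m (pp k) (comp i j x) = (if k = i then comp i j x else 0)"
  unfolding comp_def by (simp add: mid left_pp)
lemma comp_right: "m (comp i j x) (pp k) = (if j = k then comp i j x else 0)"
  unfolding comp_def by (simp add: right_pp)
lemma comp_comp: "comp k l (comp i j x) = (if k = i \<and> l = j then comp i j x else 0)"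
  unfolding comp_def[of k l "comp i j x"] by (simp add: comp_left comp_right)
lemma comp_st: "st (comp j i x) = comp i j (st x)"
  unfolding comp_def by (simp add: stm pp_st mid)
lemma comp_add: "comp i j (x + y) = comp i j x + comp i j y"
  unfolding comp_def by (simp add: ladd radd)
lemma comp_neg: "comp i j (- x) = - comp i j x"
  unfolding comp_def by (simp add: mnegl mnegr)
lemma comp_diff: "comp i j (x - y) = comp i j x - comp i j y"
  unfolding comp_def by (simp add: mdiffl mdiffr)
lemma comp_sm: "comp i j (smul c x) = smul c (comp i j x)"
  unfolding comp_def by (simp add: lsm rsm)
lemma comp_sg: "comp i j (sg s x) = sg s (comp i j x)"
  by (simp add: sg_def comp_neg)
lemma comp_0: "comp i j 0 = 0"
  unfolding comp_def by simp

lemma decomp: "x = comp True True x + comp True False x + comp False True x + comp False False x"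
proof -
  have s: "pp True + pp False = one" by (simp add: pp_def)
  have "comp i True x + comp i False x = m (pp i) x" for i
    unfolding comp_def by (simp add: radd[symmetric] s unitr)
  hence "comp True True x + comp True False x + (comp False True x + comp False False x)
     = m (pp True) x + m (pp False) x" by simp
  also have "... = x" by (simp add: ladd[symmetric] s unitl)
  finally show ?thesis by (simp add: add.assoc)
qed

lemma comp_ext: assumes "\<And>i j. comp i j x = comp i j y" shows "x = y"
  using decomp[of x] decomp[of y] assms by simp

lemma mem_comp: "a = comp k l x \<Longrightarrow> comp i j a = (if i = k \<and> j = l then a else 0)"
  by (simp add: comp_comp)

lemma comp_ml: "comp i j (m (pp k) x) = (if i = k then comp i j x else 0)"
proof -
  have "comp i j (m (pp k) x) = m (m (pp i) (m (pp k) x)) (pp j)" by (simp add: comp_def)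
  also have "... = (if i = k then comp i j x else 0)"
    by (simp add: left_pp comp_def)
  finally show ?thesis .
qed

lemma comp_mr: "comp i j (m x (pp k)) = (if j = k then comp i j x else 0)"
proof -
  have "comp i j (m x (pp k)) = m (m (pp i) (m x (pp k))) (pp j)" by (simp add: comp_def)
  also have "... = m (m (m (pp i) x) (pp k)) (pp j)" by (simp add: mid)
  also have "... = (if j = k then comp i j x else 0)"
    by (auto simp add: right_pp comp_def)
  finally show ?thesis .
qed

definition E :: "bool \<Rightarrow> 'a" where
  "E s = (if s then pp True - pp False else smul \<i> (pp True - pp False))"
definition sig :: "bool \<Rightarrow> complex" where "sig s = (if s then 1 else \<i>)"
definition DD :: "bool \<Rightarrow> bool \<Rightarrow> 'a \<Rightarrow> 'a" where
  "DD i j z = (if i then z else - z) + (if j then z else - z)"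

lemma comp_PA_E: "comp i j (PA m st s (E s) y) = smul (sig s) (DD i j (comp i j y))"
proof -
  let ?d = "pp True - pp False"
  have std: "st ?d = ?d" by (simp add: stdiff pp_st)
  have c: "comp i j (m ?d y + m y ?d) = DD i j (comp i j y)"
    by (cases i; cases j) (simp_all add: comp_add comp_diff mdiffl mdiffr comp_ml comp_mr DD_def)
  show ?thesis
  proof (cases s)
    case True
    then show ?thesis using c by (simp add: PA_def E_def sg_def sig_def std sm1)
  next
    case False
    have "PA m st s (E s) y = smul \<i> (m ?d y + m y ?d)"
      using False by (simp add: PA_def E_def sg_def std stsm lsm rsm smnegl smadd mnegr)
    then show ?thesis using False c by (simp add: sig_def comp_sm)
  qed
qed

lemma comp_PA_ppl: "comp i j (PA m st s (pp k) y) =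
   (if i = k then comp i j y else 0) + sg s (if j = k then comp i j y else 0)"
  by (simp add: PA_def pp_st comp_add comp_sg comp_ml comp_mr)

lemma comp_PA_ppr: "comp i j (PA m st s y (pp k)) =
   (if j = k then comp i j y else 0) + sg s (if i = k then st (comp j i y) else 0)"
  by (simp add: PA_def comp_add comp_sg comp_ml comp_mr comp_st)

end

context asap begin
lemma sig_nz: "sig s \<noteq> 0" by (simp add: sig_def)
lemma E_diag: assumes "PA m st s (E s) x = PA m st s (E s) y" shows "comp i i x = comp i i y"
proof -
  have "smul (sig s) (DD i i (comp i i x)) = smul (sig s) (DD i i (comp i i y))"
    using arg_cong[OF assms, of "comp i i"] by (simp add: comp_PA_E)
  hence "DD i i (comp i i x) = DD i i (comp i i y)" by (rule smul_cancel[OF sig_nz])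
  hence "sg i (comp i i x) + sg i (comp i i x) = sg i (comp i i y) + sg i (comp i i y)"
    by (simp add: DD_def sg_def)
  hence "sg i (comp i i x) = sg i (comp i i y)" by (rule dbl_cancel)
  thus ?thesis by (simp add: sg_inj)
qed
end

locale setting = A: asap smA mA stA oneA p + B: asa smB mB stB
  for smA :: "complex \<Rightarrow> 'a::ab_group_add \<Rightarrow> 'a" and mA stA oneA p
    and smB :: "complex \<Rightarrow> 'b::ab_group_add \<Rightarrow> 'b" and mB stB +
  fixes \<Phi> :: "'a \<Rightarrow> 'b" and s :: bool
  assumes bij: "bij \<Phi>" and pres: "\<And>a b. \<Phi> (PA mA stA s a b) = PA mB stB s (\<Phi> a) (\<Phi> b)"
begin

lemma surjP: "\<exists>t. \<Phi> t = u" using bij by (metis bij_pointE)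
lemma injP: "\<Phi> x = \<Phi> y \<longleftrightarrow> x = y" using bij by (metis bij_is_inj injD)

lemma Phi0[simp]: "\<Phi> 0 = 0"
proof -
  obtain z where z: "\<Phi> z = 0" using surjP by blast
  have "\<Phi> (PA mA stA s 0 z) = PA mB stB s (\<Phi> 0) (\<Phi> z)" by (rule pres)
  thus ?thesis using z by simp
qed

lemma transL: "\<Phi> t = \<Phi> a + \<Phi> b + \<Phi> c \<Longrightarrow>
  \<Phi> (PA mA stA s x t) = \<Phi> (PA mA stA s x a) + \<Phi> (PA mA stA s x b) + \<Phi> (PA mA stA s x c)"
  by (simp add: pres B.PA_addr)
lemma transR: "\<Phi> t = \<Phi> a + \<Phi> b + \<Phi> c \<Longrightarrow>
  \<Phi> (PA mA stA s t x) = \<Phi> (PA mA stA s a x) + \<Phi> (PA mA stA s b x) + \<Phi> (PA mA stA s c x)"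
  by (simp add: pres B.PA_addl)

lemma claimA:
  assumes hb: "\<And>i j. A.comp i j b = (if i \<and> \<not> j then b else 0)"
      and hc: "\<And>i j. A.comp i j c = (if \<not> i \<and> j then c else 0)"
  shows "\<Phi> (b + c) = \<Phi> b + \<Phi> c"
proof -
  obtain t where ht: "\<Phi> t = \<Phi> b + \<Phi> c + \<Phi> 0" using surjP by metis
  have Eb: "PA mA stA s (A.E s) b = 0"
    by (rule A.comp_ext) (simp add: A.comp_PA_E hb A.DD_def A.comp_0)
  have Ec: "PA mA stA s (A.E s) c = 0"
    by (rule A.comp_ext) (simp add: A.comp_PA_E hc A.DD_def A.comp_0)
  have "\<Phi> (PA mA stA s (A.E s) t) = \<Phi> (PA mA stA s (A.E s) 0)"
    using transL[OF ht, of "A.E s"] Eb Ec by simp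
  hence E: "PA mA stA s (A.E s) t = PA mA stA s (A.E s) 0" by (rule injP[THEN iffD1])
  have t11: "A.comp True True t = 0" using A.E_diag[OF E, of True] by (simp add: A.comp_0)
  have t22: "A.comp False False t = 0" using A.E_diag[OF E, of False] by (simp add: A.comp_0)
  have Pb1: "PA mA stA s b (A.pp True) = 0"
    by (rule A.comp_ext, case_tac i; case_tac j; simp add: A.comp_PA_ppr hb A.comp_0)
  have "\<Phi> (PA mA stA s t (A.pp True)) = \<Phi> (PA mA stA s c (A.pp True))"
    using transR[OF ht, of "A.pp True"] Pb1 by simp
  hence R1: "PA mA stA s t (A.pp True) = PA mA stA s c (A.pp True)" by (rule injP[THEN iffD1])
  have t21: "A.comp False True t = c"
    using arg_cong[OF R1, of "A.comp False True"] by (simp add: A.comp_PA_ppr hc)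
  have Pc2: "PA mA stA s c (A.pp False) = 0"
    by (rule A.comp_ext, case_tac i; case_tac j; simp add: A.comp_PA_ppr hc A.comp_0)
  have "\<Phi> (PA mA stA s t (A.pp False)) = \<Phi> (PA mA stA s b (A.pp False))"
    using transR[OF ht, of "A.pp False"] Pc2 by simp
  hence R2: "PA mA stA s t (A.pp False) = PA mA stA s b (A.pp False)" by (rule injP[THEN iffD1])
  have t12: "A.comp True False t = b"
    using arg_cong[OF R2, of "A.comp True False"] by (simp add: A.comp_PA_ppr hb)
  have "t = b + c"
    by (rule A.comp_ext, case_tac i; case_tac j; simp add: t11 t12 t21 t22 A.comp_add hb hc)
  thus ?thesis using ht by simp
qed

lemma claim_i:
  assumes ha: "\<And>i j. A.comp i j a = (if i \<and> j then a else 0)"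
      and hb: "\<And>i j. A.comp i j b = (if i \<and> \<not> j then b else 0)"
      and hc: "\<And>i j. A.comp i j c = (if \<not> i \<and> j then c else 0)"
  shows "\<Phi> (a + b + c) = \<Phi> a + \<Phi> b + \<Phi> c"
proof -
  obtain t where ht: "\<Phi> t = \<Phi> a + \<Phi> b + \<Phi> c" using surjP by metis
  have Eb: "PA mA stA s (A.E s) b = 0"
    by (rule A.comp_ext) (simp add: A.comp_PA_E hb A.DD_def A.comp_0)
  have Ec: "PA mA stA s (A.E s) c = 0"
    by (rule A.comp_ext) (simp add: A.comp_PA_E hc A.DD_def A.comp_0)
  have "\<Phi> (PA mA stA s (A.E s) t) = \<Phi> (PA mA stA s (A.E s) a)"
    using transL[OF ht, of "A.E s"] Eb Ec by simp
  hence E: "PA mA stA s (A.E s) t = PA mA stA s (A.E s) a" by (rule injP[THEN iffD1])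
  have t11: "A.comp True True t = a" using A.E_diag[OF E, of True] by (simp add: ha)
  have t22: "A.comp False False t = 0" using A.E_diag[OF E, of False] by (simp add: ha)
  have Pa: "PA mA stA s (A.pp False) a = 0"
    by (rule A.comp_ext, case_tac i; case_tac j; simp add: A.comp_PA_ppl ha A.comp_0)
  have Pb: "PA mA stA s (A.pp False) b = sg s b"
    by (rule A.comp_ext, case_tac i; case_tac j; simp add: A.comp_PA_ppl hb A.comp_0 A.comp_sg)
  have Pc: "PA mA stA s (A.pp False) c = c"
    by (rule A.comp_ext, case_tac i; case_tac j; simp add: A.comp_PA_ppl hc A.comp_0)
  have hb': "A.comp i j (sg s b) = (if i \<and> \<not> j then sg s b else 0)" for i j
    by (simp add: A.comp_sg hb)
  have "\<Phi> (PA mA stA s (A.pp False) t) = \<Phi> (sg s b) + \<Phi> c"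
    using transL[OF ht, of "A.pp False"] Pa Pb Pc by simp
  also have "... = \<Phi> (sg s b + c)" using claimA[OF hb' hc] by simp
  finally have R: "PA mA stA s (A.pp False) t = sg s b + c" by (rule injP[THEN iffD1])
  have t12: "A.comp True False t = b"
    using arg_cong[OF R, of "A.comp True False"]
    by (simp add: A.comp_PA_ppl hb hc A.comp_add A.comp_sg sg_inj)
  have t21: "A.comp False True t = c"
    using arg_cong[OF R, of "A.comp False True"]
    by (simp add: A.comp_PA_ppl hb hc A.comp_add A.comp_sg)
  have "t = a + b + c"
    by (rule A.comp_ext, case_tac i; case_tac j; simp add: t11 t12 t21 t22 A.comp_add ha hb hc)
  thus ?thesis using ht by simp
qed

lemma claim_ii:
  assumes hd: "\<And>i j. A.comp i j d = (if \<not> i \<and> \<not> j then d else 0)"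
      and hb: "\<And>i j. A.comp i j b = (if i \<and> \<not> j then b else 0)"
      and hc: "\<And>i j. A.comp i j c = (if \<not> i \<and> j then c else 0)"
  shows "\<Phi> (b + c + d) = \<Phi> b + \<Phi> c + \<Phi> d"
proof -
  obtain t where ht: "\<Phi> t = \<Phi> d + \<Phi> b + \<Phi> c" using surjP by metis
  have Eb: "PA mA stA s (A.E s) b = 0"
    by (rule A.comp_ext) (simp add: A.comp_PA_E hb A.DD_def A.comp_0)
  have Ec: "PA mA stA s (A.E s) c = 0"
    by (rule A.comp_ext) (simp add: A.comp_PA_E hc A.DD_def A.comp_0)
  have "\<Phi> (PA mA stA s (A.E s) t) = \<Phi> (PA mA stA s (A.E s) d)"
    using transL[OF ht, of "A.E s"] Eb Ec by simp
  hence E: "PA mA stA s (A.E s) t = PA mA stA s (A.E s) d" by (rule injP[THEN iffD1])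
  have t11: "A.comp True True t = 0" using A.E_diag[OF E, of True] by (simp add: hd)
  have t22: "A.comp False False t = d" using A.E_diag[OF E, of False] by (simp add: hd)
  have Pd: "PA mA stA s (A.pp True) d = 0"
    by (rule A.comp_ext, case_tac i; case_tac j; simp add: A.comp_PA_ppl hd A.comp_0)
  have Pb: "PA mA stA s (A.pp True) b = b"
    by (rule A.comp_ext, case_tac i; case_tac j; simp add: A.comp_PA_ppl hb A.comp_0)
  have Pc: "PA mA stA s (A.pp True) c = sg s c"
    by (rule A.comp_ext, case_tac i; case_tac j; simp add: A.comp_PA_ppl hc A.comp_0 A.comp_sg)
  have hc': "A.comp i j (sg s c) = (if \<not> i \<and> j then sg s c else 0)" for i j
    by (simp add: A.comp_sg hc)
  have "\<Phi> (PA mA stA s (A.pp True) t) = \<Phi> b + \<Phi> (sg s c)"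
    using transL[OF ht, of "A.pp True"] Pd Pb Pc by simp
  also have "... = \<Phi> (b + sg s c)" using claimA[OF hb hc'] by simp
  finally have R: "PA mA stA s (A.pp True) t = b + sg s c" by (rule injP[THEN iffD1])
  have t12: "A.comp True False t = b"
    using arg_cong[OF R, of "A.comp True False"]
    by (simp add: A.comp_PA_ppl hb hc A.comp_add A.comp_sg)
  have t21: "A.comp False True t = c"
    using arg_cong[OF R, of "A.comp False True"]
    by (simp add: A.comp_PA_ppl hb hc A.comp_add A.comp_sg sg_inj)
  have "t = b + c + d"
    by (rule A.comp_ext, case_tac i; case_tac j; simp add: t11 t12 t21 t22 A.comp_add hd hb hc)
  thus ?thesis using ht by (simp add: add_ac)
qed

end
theorem claim2p3:
  fixes smulA :: "complex \<Rightarrow> 'a::banach \<Rightarrow> 'a"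
    and multA :: "'a \<Rightarrow> 'a \<Rightarrow> 'a" and starA :: "'a \<Rightarrow> 'a" and oneA :: 'a
    and smulB :: "complex \<Rightarrow> 'b::ab_group_add \<Rightarrow> 'b"
    and multB :: "'b \<Rightarrow> 'b \<Rightarrow> 'b" and starB :: "'b \<Rightarrow> 'b"
    and \<Phi> :: "'a \<Rightarrow> 'b" and p1 p2 :: 'a
  assumes A: "alt_Wstar_factor smulA multA starA oneA"
    and B: "alt_star_alg smulB multB starB"
    and bij: "bij \<Phi>"
    and pres: "preserves_plus multA starA multB starB \<Phi> \<or> preserves_minus multA starA multB starB \<Phi>"
    and p1: "is_projection multA starA p1" and p1_ne: "p1 \<noteq> oneA"
    and p2: "p2 = oneA - p1"
  shows "\<forall>a11\<in>peirce multA p1 p1. \<forall>b12\<in>peirce multA p1 p2.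
           \<forall>c21\<in>peirce multA p2 p1. \<forall>d22\<in>peirce multA p2 p2.
             \<Phi> (a11 + b12 + c21) = \<Phi> a11 + \<Phi> b12 + \<Phi> c21 \<and>
             \<Phi> (b12 + c21 + d22) = \<Phi> b12 + \<Phi> c21 + \<Phi> d22"
proof -
  have Aalg: "alt_star_alg smulA multA starA" and unit: "is_unit multA oneA"
    using A unfolding alt_Wstar_factor_def alt_Cstar_alg_def by auto
  have sp: "starA p1 = p1" "multA p1 p1 = p1" using p1 unfolding is_projection_def by auto
  obtain s where ps: "\<And>a b. \<Phi> (PA multA starA s a b) = PA multB starB s (\<Phi> a) (\<Phi> b)"
  proof (cases "preserves_plus multA starA multB starB \<Phi>")
    case True
    then show ?thesis using that[of True] unfolding preserves_plus_def PA_def sg_def by simp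
  next
    case False
    then have "preserves_minus multA starA multB starB \<Phi>" using pres by simp
    then show ?thesis using that[of False] unfolding preserves_minus_def PA_def sg_def by simp
  qed
  interpret S: setting smulA multA starA oneA p1 smulB multB starB \<Phi> s
    apply unfold_locales
    using Aalg B unit sp bij ps unfolding is_unit_def by auto
  have pT: "S.A.pp True = p1" and pF: "S.A.pp False = p2" by (simp_all add: S.A.pp_def p2)
  have mem: "x \<in> peirce multA (S.A.pp k) (S.A.pp l) \<Longrightarrow>
      S.A.comp i j x = (if i = k \<and> j = l then x else 0)" for x k l i j
    unfolding peirce_def by (auto simp add: S.A.comp_def[symmetric] S.A.mem_comp)
  show ?thesis
  proof (intro ballI conjI)
    fix a b c d
    assume ha: "a \<in> peirce multA p1 p1" and hb: "b \<in> peirce multA p1 p2"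
      and hc: "c \<in> peirce multA p2 p1" and hd: "d \<in> peirce multA p2 p2"
    have ha': "S.A.comp i j a = (if i \<and> j then a else 0)" for i j
      using mem[of a True True i j] ha pT by simp
    have hb': "S.A.comp i j b = (if i \<and> \<not> j then b else 0)" for i j
      using mem[of b True False i j] hb pT pF by simp
    have hc': "S.A.comp i j c = (if \<not> i \<and> j then c else 0)" for i j
      using mem[of c False True i j] hc pT pF by simp
    have hd': "S.A.comp i j d = (if \<not> i \<and> \<not> j then d else 0)" for i j
      using mem[of d False False i j] hd pF by simp
    show "\<Phi> (a + b + c) = \<Phi> a + \<Phi> b + \<Phi> c" by (rule S.claim_i[OF ha' hb' hc'])
    show "\<Phi> (b + c + d) = \<Phi> b + \<Phi> c + \<Phi> d" by (rule S.claim_ii[OF hd' hb' hc'])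
  qed
qed

end
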